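(* Let $n\ge 1$, let $x_1<x_2<\dots<x_n$ be real numbers, and let $t_0,t_1,\dots,t_n:\mathbb{R}\to\mathbb{R}$ be functions. Define the piecewise function $$t(x)=\begin{cases} t_0(x), & x<x_1,\\ t_i(x), & x_i\le x<x_{i+1}\ (1\le i\le n-1),\\ t_n(x), & x_n\le x.\end{cases}$$ Define $H_1:\mathbb{R}\to\mathbb{R}$ by $$H_1(x)=1+\int_0^{\pi/2}\left(\frac{x\sec^2 s\, e^{-x\tan s}}{\left(1+e^{-x\tan s}\right)^2}-\frac12 e^{-x^2\tan s}x^2\sec^2 s\right)ds$$ (an improper Riemann integral at $s=\pi/2$), and for $a<b$ put $I(x,a,b)=H_1(x-a)-H_1(x-b)$. Then for every real $x$, $$t(x)=\bigl(1-H_1(x-x_1)\bigr)t_0(x)+\sum_{i=1}^{n-1}I(x,x_i,x_{i+1})\,t_i(x)+H_1(x-x_n)\,t_n(x).$$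
   Context: The paper calls this "representation of a piecewise-defined function in analytic form without approximation", assuming each $t_i$ itself has such a form. *)

theory Defs
  imports "HOL-Analysis.Analysis"
begin

definition sec :: "real \<Rightarrow> real" where
  "sec s = 1 / cos s"

definition H1_integrand :: "real \<Rightarrow> real \<Rightarrow> real" where
  "H1_integrand x s =
     x * (sec s)^2 * exp (- x * tan s) / (1 + exp (- x * tan s))^2
     - 1/2 * exp (- (x^2) * tan s) * x^2 * (sec s)^2"

definition H1 :: "real \<Rightarrow> real" where
  "H1 x = 1 + Lim (at_left (pi/2)) (\<lambda>b. integral {0..b} (H1_integrand x))"

definition Iab :: "real \<Rightarrow> real \<Rightarrow> real \<Rightarrow> real" where
  "Iab x a b = H1 (x - a) - H1 (x - b)"

definition piecewise_fun :: "nat \<Rightarrow> (nat \<Rightarrow> real) \<Rightarrow> (nat \<Rightarrow> real \<Rightarrow> real) \<Rightarrow> real \<Rightarrow> real" where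
  "piecewise_fun n xs ts y =
     (if y < xs 1 then ts 0 y
      else if xs n \<le> y then ts n y
      else ts (THE i. 1 \<le> i \<and> i \<le> n - 1 \<and> xs i \<le> y \<and> y < xs (Suc i)) y)"

end

theory Submission imports Defs "HOL-Real_Asymp.Real_Asymp" begin
definition FF :: "real \<Rightarrow> real \<Rightarrow> real" where
 "FF x s = 1/(1+exp(-x*tan s)) + 1/2*exp(-(x^2)*tan s)"

lemma FF_deriv: assumes "cos s \<noteq> 0"
  shows "(FF x has_real_derivative H1_integrand x s) (at s)"
proof -
  have p: "1 + exp (- x * tan s) \<noteq> 0" by (smt (verit) exp_gt_zero)
  show ?thesis
    unfolding FF_def H1_integrand_def sec_def
    apply (rule derivative_eq_intros refl DERIV_tan assms p)+
    using assms p apply (simp add: field_simps power2_eq_square)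
    done
qed
lemma FF_int: assumes "0 \<le> b" "b < pi/2"
  shows "integral {0..b} (H1_integrand x) = FF x b - 1"
proof -
  have "(H1_integrand x has_integral FF x b - FF x 0) {0..b}"
  proof (rule fundamental_theorem_of_calculus[OF assms(1)])
    fix s assume s: "s \<in> {0..b}"
    then have "cos s > 0" using assms by (intro cos_gt_zero_pi) auto
    then show "(FF x has_vector_derivative H1_integrand x s) (at s within {0..b})"
      using FF_deriv[of s x] by (auto simp: has_real_derivative_iff_has_vector_derivative intro: has_vector_derivative_at_within)
  qed
  moreover have "FF x 0 = 1" by (simp add: FF_def)
  ultimately show ?thesis by (simp add: integral_unique)
qed

lemma FF_lim: "((\<lambda>u::real. 1/(1+exp(-(x::real)*u)) + 1/2*exp(-(x^2)*u)) \<longlongrightarrow> (if x \<ge> 0 then 1 else (0::real))) at_top"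
proof (cases "x < 0")
  case True
  define c where "c = - x"
  have c: "c > 0" "x = - c" using True by (auto simp: c_def)
  have c2: "c^2 > 0" using c by simp
  have a1: "((\<lambda>u::real. 1/(1+exp(c*u))) \<longlongrightarrow> 0) at_top"
    using c(1) by real_asymp
  have a2: "((\<lambda>u::real. exp(-(c^2)*u)) \<longlongrightarrow> 0) at_top"
    using c2 by real_asymp
  have "((\<lambda>u::real. 1/(1+exp(c*u)) + 1/2*exp(-(c^2)*u)) \<longlongrightarrow> 0 + 1/2 * 0) at_top"
    by (intro tendsto_intros a1 a2)
  then show ?thesis using c by simp
next
  case False
  show ?thesis
  proof (cases "x = 0")
    case True then show ?thesis by simp
  next
    case False then have "x > 0" using \<open>\<not> x < 0\<close> by simp
    then show ?thesis by simp real_asymp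
  qed
qed

lemma H1_eq: "H1 x = (if x \<ge> 0 then 1 else 0)"
proof -
  have eq: "FF x = (\<lambda>s. (\<lambda>u. 1/(1+exp(-x*u)) + 1/2*exp(-(x^2)*u)) (tan s))"
    by (simp add: FF_def fun_eq_iff)
  have t: "(FF x \<longlongrightarrow> (if x \<ge> 0 then 1 else 0)) (at_left (pi/2))"
    unfolding eq by (rule filterlim_compose[OF FF_lim filterlim_tan_at_left])
  have ev: "eventually (\<lambda>b. FF x b - 1 = integral {0..b} (H1_integrand x)) (at_left (pi/2))"
  proof (rule eventually_mono[OF eventually_at_left_real[of 0 "pi/2"]])
    fix b assume "b \<in> {0<..<pi/2}"
    then show "FF x b - 1 = integral {0..b} (H1_integrand x)" using FF_int[of b x] by simp
  qed simp
  have "((\<lambda>b. FF x b - 1) \<longlongrightarrow> (if x \<ge> 0 then 1 else 0) - 1) (at_left (pi/2))"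
    by (rule tendsto_diff[OF t tendsto_const])
  then have "((\<lambda>b. integral {0..b} (H1_integrand x)) \<longlongrightarrow> (if x \<ge> 0 then 1 else 0) - 1) (at_left (pi/2))"
    by (rule Lim_transform_eventually[OF _ ev])
  then have "Lim (at_left (pi/2)) (\<lambda>b. integral {0..b} (H1_integrand x)) = (if x \<ge> 0 then 1 else 0) - 1"
    by (rule tendsto_Lim[OF trivial_limit_at_left_real])
  then show ?thesis by (simp add: H1_def)
qed

lemma Iab_eq: "a < b \<Longrightarrow> Iab x a b = (if a \<le> x \<and> x < b then 1 else 0)"
  by (auto simp: Iab_def H1_eq)

theorem theorem1:
  fixes n :: nat and xs :: "nat \<Rightarrow> real" and ts :: "nat \<Rightarrow> real \<Rightarrow> real" and x :: real
  assumes "n \<ge> 1"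
    and "\<And>i. 1 \<le> i \<Longrightarrow> i < n \<Longrightarrow> xs i < xs (Suc i)"
  shows "piecewise_fun n xs ts x =
           (1 - H1 (x - xs 1)) * ts 0 x
           + (\<Sum>i = 1..n - 1. Iab x (xs i) (xs (Suc i)) * ts i x)
           + H1 (x - xs n) * ts n x"
proof -
  have mono: "1 \<le> i \<Longrightarrow> i < j \<Longrightarrow> j \<le> n \<Longrightarrow> xs i < xs j" for i j
  proof (induction j)
    case 0 then show ?case by simp
  next
    case (Suc j)
    show ?case
    proof (cases "i = j")
      case True then show ?thesis using Suc.prems assms(2) by auto
    next
      case False then have "xs i < xs j" using Suc by auto
      also have "xs j < xs (Suc j)" using Suc.prems False assms(2) by auto
      finally show ?thesis .
    qed
  qed
  have mono': "\<And>i j. 1 \<le> i \<Longrightarrow> i \<le> j \<Longrightarrow> j \<le> n \<Longrightarrow> xs i \<le> xs j"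
    proof -
    fix i j :: nat assume "1 \<le> i" "i \<le> j" "j \<le> n"
    then show "xs i \<le> xs j" using mono[of i j] by (cases "i = j") auto
  qed
  have I: "\<And>i. i \<in> {1..n-1} \<Longrightarrow> Iab x (xs i) (xs (Suc i)) = (if xs i \<le> x \<and> x < xs (Suc i) then 1 else 0)"
    using assms by (intro Iab_eq) auto
  show ?thesis
  proof (cases "x < xs 1")
    case True
    have "\<And>i. i \<in> {1..n-1} \<Longrightarrow> \<not> (xs i \<le> x)"
    proof -
      fix i assume "i \<in> {1..n-1}"
      then have "xs 1 \<le> xs i" by (intro mono') auto
      then show "\<not> (xs i \<le> x)" using True by linarith
    qed
    then have "(\<Sum>i = 1..n - 1. Iab x (xs i) (xs (Suc i)) * ts i x) = 0" using I by simp
    moreover have "\<not> xs n \<le> x" using True mono'[of 1 n] assms(1) by auto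
    ultimately show ?thesis using True by (simp add: piecewise_fun_def H1_eq)
  next
    case F1: False
    show ?thesis
    proof (cases "xs n \<le> x")
      case True
      have "\<And>i. i \<in> {1..n-1} \<Longrightarrow> \<not> (x < xs (Suc i))"
      proof -
        fix i assume "i \<in> {1..n-1}"
        then have "xs (Suc i) \<le> xs n" using assms(1) by (intro mono') auto
        then show "\<not> (x < xs (Suc i))" using True by linarith
      qed
      then have "(\<Sum>i = 1..n - 1. Iab x (xs i) (xs (Suc i)) * ts i x) = 0" using I by simp
      then show ?thesis using True F1 by (simp add: piecewise_fun_def H1_eq)
    next
      case F2: False
      define S where "S = {i \<in> {1..n}. xs i \<le> x}"
      define k where "k = Max S"
      have fS: "finite S" "S \<noteq> {}" using F1 assms(1) by (auto simp: S_def)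
      have kS: "k \<in> S" using fS by (simp add: k_def)
      have kmax: "\<And>i. i \<in> S \<Longrightarrow> i \<le> k" using fS by (simp add: k_def)
      have k1: "1 \<le> k" "xs k \<le> x" "k \<le> n" using kS by (auto simp: S_def)
      have "k \<noteq> n" using k1 F2 by auto
      then have kn: "k < n" using k1 by simp
      have kx: "x < xs (Suc k)"
      proof (rule ccontr)
        assume "\<not> x < xs (Suc k)"
        then have "Suc k \<in> S" using kn by (auto simp: S_def)
        then show False using kmax[of "Suc k"] by simp
      qed
      have uniq: "\<And>i. 1 \<le> i \<and> i \<le> n - 1 \<and> xs i \<le> x \<and> x < xs (Suc i) \<Longrightarrow> i = k"
      proof -
        fix i assume h: "1 \<le> i \<and> i \<le> n - 1 \<and> xs i \<le> x \<and> x < xs (Suc i)"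
        show "i = k"
        proof (rule ccontr)
          assume "i \<noteq> k"
          then consider "i < k" | "k < i" by linarith
          then show False
          proof cases
            case 1 then have "xs (Suc i) \<le> xs k" using h k1 by (intro mono') auto
            then show False using h k1 by linarith
          next
            case 2 then have "xs (Suc k) \<le> xs i" using h k1 kn by (intro mono') auto
            then show False using h kx by linarith
          qed
        qed
      qed
      have kP: "1 \<le> k \<and> k \<le> n - 1 \<and> xs k \<le> x \<and> x < xs (Suc k)" using k1 kn kx by auto
      have the: "(THE i. 1 \<le> i \<and> i \<le> n - 1 \<and> xs i \<le> x \<and> x < xs (Suc i)) = k"
        by (rule the_equality[where P="\<lambda>i. 1 \<le> i \<and> i \<le> n - 1 \<and> xs i \<le> x \<and> x < xs (Suc i)", OF kP uniq])
      have "(\<Sum>i = 1..n - 1. Iab x (xs i) (xs (Suc i)) * ts i x) = (\<Sum>i = 1..n - 1. if i = k then ts i x else 0)"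
      proof (rule sum.cong[OF refl])
        fix i assume i: "i \<in> {1..n - 1}"
        show "Iab x (xs i) (xs (Suc i)) * ts i x = (if i = k then ts i x else 0)"
        proof (cases "i = k")
          case True then show ?thesis using I[OF i] kP by simp
        next
          case False
          have "\<not> (xs i \<le> x \<and> x < xs (Suc i))" using uniq[of i] i False by auto
          then show ?thesis using I[OF i] False by auto
        qed
      qed
      also have "\<dots> = ts k x" using kP by simp
      finally show ?thesis using F1 F2 the by (simp add: piecewise_fun_def H1_eq)
    qed
  qed
qed

end
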